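(* Fix an integer $t\geq 1$ and a real $\alpha$ with $0<\alpha<1-\frac{1}{\sqrt{2}}$. Then, as $m\to\infty$ through values for which $\alpha m$ is an integer, \[ R_t(\alpha m, m)\leq \left(1-\frac{1}{2^t}\right)2^m-\frac{\sqrt{2^t-1}}{2^t(2+\sqrt{2})}\,2^{ m \left(\frac{1}{2}+\alpha \log_2(1+\sqrt{2})\right)}(1+o(1)). \]
   Context: For a $t\times n$ matrix $\mathbf{v}$ over $\mathbb{F}_q$ with rows $\overline{v}_1,\dots,\overline{v}_t$, its $t$-weight is $\mathrm{wt}^{(t)}(\mathbf{v})=\left|\bigcup_{i=1}^t \mathrm{supp}(\overline{v}_i)\right|$, and $d^{(t)}(\mathbf{u},\mathbf{v})=\mathrm{wt}^{(t)}(\mathbf{u}-\mathbf{v})$. For a linear code $C\subseteq\mathbb{F}_q^n$ and $t\in\mathbb{N}$, let $C^t$ be the set of $t\times n$ matrices all of whose rows lie in $C$. The $t$-th generalized covering radius $R_t(C)$ is the smallest integer $\rho$ such that for every $\mathbf{v}\in\mathbb{F}_q^{t\times n}$ there is $\mathbf{c}\in C^t$ with $d^{(t)}(\mathbf{v},\mathbf{c})\leq \rho$. Binary Reed–Muller codes $\mathrm{RM}(r,m)\subseteq\mathbb{F}_2^{2^m}$ ($0\le r\le m$) are defined recursively: $\mathrm{RM}(0,m)=\{\overline{0},\overline{1}\}$, $\mathrm{RM}(m,m)=\mathbb{F}_2^{2^m}$, and for $1\leq r\leq m-1$, $\mathrm{RM}(r,m)=\{(\overline{u},\overline{u}+\overline{v})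 : \overline{u}\in \mathrm{RM}(r,m-1),\ \overline{v}\in\mathrm{RM}(r-1,m-1)\}$. It is a linear code of length $2^m$ and dimension $\sum_{i=0}^r\binom{m}{i}$. Write $R_t(r,m)=R_t(\mathrm{RM}(r,m))$. *)

theory Defs
  imports Complex_Main
begin

text \<open>Binary vectors of length n are represented as bool lists of length n
  (True = 1, False = 0); addition in F_2 is exclusive or, i.e. (\<noteq>).\<close>

definition vadd :: "bool list \<Rightarrow> bool list \<Rightarrow> bool list" where
  "vadd u v = map2 (\<noteq>) u v"

fun RM :: "nat \<Rightarrow> nat \<Rightarrow> bool list set" where
  "RM r 0 = {xs. length xs = 1}"
| "RM r (Suc m) =
     (if r = 0 then {replicate (2 ^ Suc m) False, replicate (2 ^ Suc m) True}
      else if Suc m \<le> r then {xs. length xs = 2 ^ Suc m}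
      else {u @ vadd u v | u v. u \<in> RM r m \<and> v \<in> RM (r - 1) m})"

text \<open>A t x n matrix is a list of t rows (each of length n).
  Its t-weight is the size of the union of the supports of its rows.\<close>

definition tweight :: "bool list list \<Rightarrow> nat" where
  "tweight vs = card {j. \<exists>v \<in> set vs. j < length v \<and> v ! j}"

definition tdist :: "bool list list \<Rightarrow> bool list list \<Rightarrow> nat" where
  "tdist us vs = tweight (map2 vadd us vs)"

definition gen_cov_radius :: "nat \<Rightarrow> nat \<Rightarrow> bool list set \<Rightarrow> nat" where
  "gen_cov_radius t n C = (LEAST \<rho>. \<forall>vs. length vs = t \<and> (\<forall>v \<in> set vs. length v = n) \<longrightarrow>
      (\<exists>cs. length cs = t \<and> set cs \<subseteq> C \<and> tdist vs cs \<le> \<rho>))"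

definition R_RM :: "nat \<Rightarrow> nat \<Rightarrow> nat \<Rightarrow> nat" where
  "R_RM t r m = gen_cov_radius t (2 ^ m) (RM r m)"

end

theory Submission
  imports Defs "HOL-Analysis.Analysis"
begin

definition sg :: "bool \<Rightarrow> real" where "sg b = (if b then -1 else 1)"

lemma sg_Not[simp]: "sg (\<not> b) = - sg b" by (simp add: sg_def)

fun cws :: "nat \<Rightarrow> bool list list" where
  "cws 0 = [[False],[True]]"
| "cws (Suc k) = concat (map (\<lambda>u. [u @ u, u @ map Not u]) (cws k))"

lemma cws_len: "c \<in> set (cws k) \<Longrightarrow> length c = 2^k"
  by (induction k arbitrary: c) auto

lemma length_cws: "length (cws k) = 2^(k+1)"
  by (induction k) (auto simp: length_concat comp_def sum_list_triv)

lemma cws_Not: "c \<in> set (cws k) \<Longrightarrow> map Not c \<in> set (cws k)"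
proof (induction k arbitrary: c)
  case 0 then show ?case by auto
next
  case (Suc k)
  then obtain u where u: "u \<in> set (cws k)" "c = u @ u \<or> c = u @ map Not u" by auto
  have u': "map Not u \<in> set (cws k)" using Suc.IH u(1) by blast
  show ?case
  proof (cases "c = u @ u")
    case True
    then show ?thesis using u' by force
  next
    case False
    then have "c = u @ map Not u" using u by blast
    then have "map Not c = map Not u @ map Not (map Not u)" by (simp add: comp_def)
    then show ?thesis using u' by force
  qed
qed

lemma vadd_repF: "length u = n \<Longrightarrow> vadd u (replicate n False) = u"
  by (induction u arbitrary: n) (auto simp: vadd_def)

lemma vadd_repT: "length u = n \<Longrightarrow> vadd u (replicate n True) = map Not u"
  by (induction u arbitrary: n) (auto simp: vadd_def)

lemma cws_RM: "c \<in> set (cws k) \<Longrightarrow> c \<in> RM 1 k"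
proof (induction k arbitrary: c)
  case 0 then show ?case by auto
next
  case (Suc k)
  show ?case
  proof (cases k)
    case 0
    then show ?thesis using cws_len[OF Suc.prems] by simp
  next
    case (Suc k')
    from Suc.prems obtain u where u: "u \<in> set (cws k)" "c = u @ u \<or> c = u @ map Not u" by auto
    have lu: "length u = 2^k" using cws_len u(1) by blast
    have uR: "u \<in> RM 1 k" using Suc.IH u(1) by blast
    have R0: "RM 0 k = {replicate (2^k) False, replicate (2^k) True}" using Suc by simp
    have "c = u @ vadd u (replicate (2^k) False) \<or> c = u @ vadd u (replicate (2^k) True)"
      using u(2) vadd_repF[OF lu] vadd_repT[OF lu] by simp
    then have "\<exists>u' v. c = u' @ vadd u' v \<and> u' \<in> RM 1 k \<and> v \<in> RM (1 - 1) k"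
      using uR R0 by auto
    then show ?thesis using Suc by simp
  qed
qed

lemma sum_split: fixes n m :: nat and f :: "nat \<Rightarrow> real"
  shows "(\<Sum>x<n+m. f x) = (\<Sum>x<n. f x) + (\<Sum>x<m. f (x+n))"
  by (induction m) (auto simp: add.commute)

lemma sum_list_concat': "sum_list (concat xss) = sum_list (map sum_list xss)"
  for xss :: "real list list"
  by (induction xss) auto

lemma parseval: "(\<Sum>c\<leftarrow>cws k. (\<Sum>x<2^k. g x * sg (c!x))\<^sup>2) = 2^(k+1) * (\<Sum>x<2^k. (g x)\<^sup>2)"
proof (induction k arbitrary: g)
  case 0
  then show ?case by (simp add: sg_def power2_eq_square)
next
  case (Suc k)
  define n :: nat where "n = 2^k"
  define W where "W = (\<lambda>h u. (\<Sum>x<n. h x * sg (u!x)))"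
  define g' where "g' = (\<lambda>x. g (x + n))"
  have nn: "(2::nat)^Suc k = n + n" by (simp add: n_def)
  have e1: "(\<Sum>x<2^Suc k. g x * sg ((u@u)!x)) = W g u + W g' u" if "length u = n" for u
    using that unfolding nn by (simp add: sum_split W_def g'_def nth_append)
  have e2: "(\<Sum>x<2^Suc k. g x * sg ((u@map Not u)!x)) = W g u - W g' u" if "length u = n" for u
    using that unfolding nn by (simp add: sum_split W_def g'_def nth_append sg_Not sum_subtractf sum_negf)
  have "(\<Sum>c\<leftarrow>cws (Suc k). (\<Sum>x<2^Suc k. g x * sg (c!x))\<^sup>2)
      = (\<Sum>u\<leftarrow>cws k. (\<Sum>x<2^Suc k. g x * sg ((u@u)!x))\<^sup>2 + (\<Sum>x<2^Suc k. g x * sg ((u@map Not u)!x))\<^sup>2)"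
    by (simp add: map_concat sum_list_concat' comp_def)
  also have "\<dots> = (\<Sum>u\<leftarrow>cws k. 2 * (W g u)\<^sup>2 + 2 * (W g' u)\<^sup>2)"
    apply (rule arg_cong[where f=sum_list])
    apply (rule map_cong[OF refl])
    subgoal for u
    proof -
      assume "u \<in> set (cws k)"
      then have lu: "length u = n" using cws_len n_def by blast
      show ?thesis by (simp only: e1[OF lu] e2[OF lu]) (simp add: power2_eq_square algebra_simps)
    qed
    done
  also have "\<dots> = 2 * (\<Sum>u\<leftarrow>cws k. (W g u)\<^sup>2) + 2 * (\<Sum>u\<leftarrow>cws k. (W g' u)\<^sup>2)"
    by (simp add: sum_list_addf sum_list_const_mult)
  also have "\<dots> = 2 * 2^(k+1) * ((\<Sum>x<n. (g x)\<^sup>2) + (\<Sum>x<n. (g' x)\<^sup>2))"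
    using Suc.IH[of g] Suc.IH[of g'] by (simp add: W_def n_def algebra_simps)
  also have "\<dots> = 2^(Suc k+1) * (\<Sum>x<2^Suc k. (g x)\<^sup>2)"
    unfolding nn by (simp add: sum_split g'_def)
  finally show ?case .
qed

lemma sum_list_lt: fixes f :: "'a \<Rightarrow> real" and a :: real
  shows "xs \<noteq> [] \<Longrightarrow> (\<forall>x\<in>set xs. f x < a) \<Longrightarrow> sum_list (map f xs) < real (length xs) * a"
proof (induction xs)
  case Nil then show ?case by simp
next
  case (Cons y ys)
  then show ?case by (cases "ys = []") (auto simp: algebra_simps)
qed

lemma parseval_exists: "\<exists>c\<in>set (cws k). (\<Sum>x<2^k. g x * sg (c!x)) \<ge> sqrt (\<Sum>x<2^k. (g x)\<^sup>2)"
proof (rule ccontr)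
  define S where "S = (\<Sum>x<(2::nat)^k. (g x)\<^sup>2)"
  define W where "W = (\<lambda>c. (\<Sum>x<(2::nat)^k. g x * sg (c!x)))"
  assume "\<not> ?thesis"
  then have lt: "\<forall>c\<in>set (cws k). W c < sqrt S" unfolding W_def S_def by auto
  have S0: "S \<ge> 0" unfolding S_def by (simp add: sum_nonneg)
  have "\<forall>c\<in>set (cws k). (W c)\<^sup>2 < S"
  proof
    fix c assume c: "c \<in> set (cws k)"
    have lc: "length c = 2^k" using cws_len c by blast
    have "W (map Not c) = - W c" unfolding W_def using lc by (simp add: sum_negf)
    then have "- W c < sqrt S" using lt cws_Not[OF c] by auto
    then have "\<bar>W c\<bar> < sqrt S" using lt c by auto
    then have "\<bar>W c\<bar>\<^sup>2 < (sqrt S)\<^sup>2"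
      by (intro power_strict_mono) auto
    then show "(W c)\<^sup>2 < S" using S0 by simp
  qed
  then have "sum_list (map (\<lambda>c. (W c)\<^sup>2) (cws k)) < length (cws k) * S"
  proof -
    have "length (cws k) \<noteq> 0" by (simp add: length_cws)
    then have ne: "cws k \<noteq> []" by auto
    show ?thesis using \<open>\<forall>c\<in>set (cws k). (W c)\<^sup>2 < S\<close> sum_list_lt[OF ne, where f="\<lambda>c. (W c)\<^sup>2" and a=S] by blast
  qed
  moreover have "sum_list (map (\<lambda>c. (W c)\<^sup>2) (cws k)) = 2^(k+1) * S"
    using parseval[where k=k and g=g] unfolding W_def S_def by simp
  ultimately show False by (simp add: length_cws)
qed

lemma row_step:
  assumes T: "T \<subseteq> {..<2^k}" and lv: "length v = 2^k"
  shows "\<exists>c\<in>RM 1 k. length c = 2^k \<and> 2 * real (card {x\<in>T. v!x = c!x}) \<ge> card T + sqrt (card T)"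
proof -
  define g where "g = (\<lambda>x. if x \<in> T then sg (v!x) else 0)"
  obtain c where c: "c \<in> set (cws k)" and W: "(\<Sum>x<2^k. g x * sg (c!x)) \<ge> sqrt (\<Sum>x<2^k. (g x)\<^sup>2)"
    using parseval_exists by blast
  have finT: "finite T" using T finite_subset by blast
  have "(\<Sum>x<(2::nat)^k. (g x)\<^sup>2) = (\<Sum>x<(2::nat)^k. if x \<in> T then 1 else 0)"
    unfolding g_def by (intro sum.cong) (auto simp: sg_def)
  also have "\<dots> = card T"
  proof -
    have TT: "{..<(2::nat)^k} \<inter> T = T" using T by blast
    show ?thesis using sum.inter_restrict[OF finite_lessThan, of "\<lambda>x. 1::real" "2^k" T] by (simp add: TT)
  qed
  finally have S: "(\<Sum>x<(2::nat)^k. (g x)\<^sup>2) = card T" .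
  have "(\<Sum>x<(2::nat)^k. g x * sg (c!x)) = (\<Sum>x<(2::nat)^k. if x \<in> T then sg (v!x) * sg (c!x) else 0)"
    unfolding g_def by (intro sum.cong) auto
  also have "\<dots> = (\<Sum>x\<in>T. sg (v!x) * sg (c!x))"
  proof -
    have TT: "{..<(2::nat)^k} \<inter> T = T" using T by blast
    show ?thesis using sum.inter_restrict[OF finite_lessThan, of "\<lambda>x. sg (v!x) * sg (c!x)" "2^k" T] by (simp add: TT)
  qed
  also have "\<dots> = (\<Sum>x\<in>T. 2 * (if v!x = c!x then 1 else 0) - 1)"
    by (intro sum.cong) (auto simp: sg_def)
  also have "\<dots> = 2 * real (card {x\<in>T. v!x = c!x}) - real (card T)"
    using finT by (simp add: sum_subtractf sum_distrib_left[symmetric] sum.If_cases Int_def)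
  finally have "sqrt (card T) \<le> 2 * real (card {x\<in>T. v!x = c!x}) - real (card T)" using W S by simp
  then show ?thesis using c cws_RM cws_len by (intro bexI[where x=c]) auto
qed

lemma rows_step:
  assumes "vs \<noteq> []" "\<forall>v\<in>set vs. length v = 2^k" "T \<subseteq> {..<2^k}"
  shows "\<exists>cs. length cs = length vs \<and> set cs \<subseteq> RM 1 k \<and> (\<forall>c\<in>set cs. length c = 2^k) \<and>
     real (card T) / 2^length vs + sqrt (real (card T) / 2^(length vs + 1))
       \<le> real (card {x\<in>T. \<forall>i<length vs. vs!i!x = cs!i!x})"
  using assms
proof (induction vs arbitrary: T)
  case Nil then show ?case by simp
next
  case (Cons v vs)
  have lv: "length v = 2^k" using Cons.prems by simp
  obtain c where c: "c \<in> RM 1 k" "length c = 2^k"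
    and cT: "2 * real (card {x\<in>T. v!x = c!x}) \<ge> card T + sqrt (card T)"
    using row_step[OF Cons.prems(3) lv] by blast
  define T' where "T' = {x\<in>T. v!x = c!x}"
  have T'sub: "T' \<subseteq> {..<2^k}" using Cons.prems(3) unfolding T'_def by blast
  have "sqrt (real (card T)) \<ge> 0" by simp
  then have y': "real (card T') \<ge> real (card T) / 2" using cT unfolding T'_def by linarith
  show ?case
  proof (cases "vs = []")
    case True
    have eq: "{x\<in>T. \<forall>i<length (v#vs). (v#vs)!i!x = [c]!i!x} = T'"
      unfolding T'_def using True by auto
    have "sqrt (real (card T) / 2^2) = sqrt (card T) / 2"
      by (simp add: real_sqrt_divide)
    then have "real (card T) / 2 + sqrt (real (card T) / 2^2) \<le> real (card T')"
      using cT unfolding T'_def by simp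
    then show ?thesis using c True eq by (intro exI[where x="[c]"]) auto
  next
    case False
    obtain cs where cs: "length cs = length vs" "set cs \<subseteq> RM 1 k" "\<forall>c\<in>set cs. length c = 2^k"
      and b: "real (card T') / 2^length vs + sqrt (real (card T') / 2^(length vs + 1))
       \<le> real (card {x\<in>T'. \<forall>i<length vs. vs!i!x = cs!i!x})"
      using Cons.IH[OF False _ T'sub] Cons.prems(2) by auto
    define L where "L = length vs"
    have eq: "{x\<in>T. \<forall>i<length (v#vs). (v#vs)!i!x = (c#cs)!i!x} = {x\<in>T'. \<forall>i<length vs. vs!i!x = cs!i!x}"
      unfolding T'_def by (auto simp: All_less_Suc2)
    have p: "(0::real) < 2^L" by simp
    have i1: "real (card T) / 2^(L+1) \<le> real (card T') / 2^L"
      using y' p by (simp add: field_simps)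
    have i2: "real (card T) / 2^(L+2) \<le> real (card T') / 2^(L+1)"
      using y' p by (simp add: field_simps)
    have "real (card T) / 2^length (v#vs) + sqrt (real (card T) / 2^(length (v#vs) + 1))
        \<le> real (card T') / 2^L + sqrt (real (card T') / 2^(L+1))"
      using i1 i2 unfolding L_def by (simp add: add_mono)
    then show ?thesis using b eq c cs unfolding L_def by (intro exI[where x="c#cs"]) auto
  qed
qed

lemma vadd_nth: "j < length a \<Longrightarrow> j < length b \<Longrightarrow> vadd a b ! j = (a!j \<noteq> b!j)"
  by (simp add: vadd_def)

lemma vadd_len: "length (vadd a b) = min (length a) (length b)"
  by (simp add: vadd_def)

lemma set_map2_vadd: "length cs = length vs \<Longrightarrow>
   set (map2 vadd vs cs) = {vadd (vs!i) (cs!i) | i. i < length vs}"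
  by (auto simp: set_zip)

lemma tdist_eq:
  assumes "length cs = length vs" "\<forall>v\<in>set vs. length v = n" "\<forall>c\<in>set cs. length c = n"
  shows "tdist vs cs = card {j. j < n \<and> (\<exists>i<length vs. vs!i!j \<noteq> cs!i!j)}"
proof -
  have "{j. \<exists>w\<in>set (map2 vadd vs cs). j < length w \<and> w!j} = {j. j < n \<and> (\<exists>i<length vs. vs!i!j \<noteq> cs!i!j)}"
    (is "?A = ?B")
  proof
    show "?A \<subseteq> ?B"
    proof
      fix j assume "j \<in> ?A"
      then obtain w where w: "w \<in> set (map2 vadd vs cs)" "j < length w" "w!j" by blast
      have "w \<in> {vadd (vs!i) (cs!i) | i. i < length vs}" using w(1) by (simp only: set_map2_vadd[OF assms(1)])
      then obtain i where i: "i < length vs" "j < length (vadd (vs!i) (cs!i))" "vadd (vs!i) (cs!i) ! j"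
        using w by auto
      have l: "length (vs!i) = n" "length (cs!i) = n" using assms i(1) by auto
      show "j \<in> ?B" using i l vadd_nth[of j "vs!i" "cs!i"] by (auto simp: vadd_len)
    qed
  next
    show "?B \<subseteq> ?A"
    proof
      fix j assume "j \<in> ?B"
      then obtain i where i: "i < length vs" "j < n" "vs!i!j \<noteq> cs!i!j" by auto
      have l: "length (vs!i) = n" "length (cs!i) = n" using assms i(1) by auto
      have "vadd (vs!i) (cs!i) \<in> {vadd (vs!i) (cs!i) | i. i < length vs}" using i by auto
      then have "vadd (vs!i) (cs!i) \<in> set (map2 vadd vs cs)" by (simp only: set_map2_vadd[OF assms(1)])
      moreover have "j < length (vadd (vs!i) (cs!i))" "vadd (vs!i) (cs!i) ! j"
        using i l vadd_nth[of j "vs!i" "cs!i"] by (auto simp: vadd_len)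
      ultimately show "j \<in> ?A" by blast
    qed
  qed
  then show ?thesis unfolding tdist_def tweight_def by simp
qed

lemma tweight_le: "\<forall>w\<in>set ws. length w \<le> n \<Longrightarrow> tweight ws \<le> n"
proof -
  assume a: "\<forall>w\<in>set ws. length w \<le> n"
  have "{j. \<exists>w\<in>set ws. j < length w \<and> w!j} \<subseteq> {..<n}" using a by fastforce
  then show ?thesis unfolding tweight_def using card_mono[of "{..<n}"] by fastforce
qed

lemma gcr_le:
  assumes "\<forall>vs. length vs = t \<and> (\<forall>v\<in>set vs. length v = n) \<longrightarrow>
      (\<exists>cs. length cs = t \<and> set cs \<subseteq> C \<and> real (tdist vs cs) \<le> B)"
  shows "real (gen_cov_radius t n C) \<le> B"
proof -
  obtain cs0 where "real (tdist (replicate t (replicate n False)) cs0) \<le> B"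
    using assms[rule_format, of "replicate t (replicate n False)"] by auto
  then have B0: "B \<ge> 0" by (meson of_nat_0_le_iff order_trans)
  define \<rho> where "\<rho> = nat \<lfloor>B\<rfloor>"
  have P: "\<forall>vs. length vs = t \<and> (\<forall>v\<in>set vs. length v = n) \<longrightarrow>
      (\<exists>cs. length cs = t \<and> set cs \<subseteq> C \<and> tdist vs cs \<le> \<rho>)"
  proof (intro allI impI)
    fix vs :: "bool list list" assume "length vs = t \<and> (\<forall>v\<in>set vs. length v = n)"
    then obtain cs where cs: "length cs = t" "set cs \<subseteq> C" "real (tdist vs cs) \<le> B"
      using assms by blast
    have "tdist vs cs \<le> \<rho>" unfolding \<rho>_def using cs(3) by (simp add: le_nat_floor)
    then show "\<exists>cs. length cs = t \<and> set cs \<subseteq> C \<and> tdist vs cs \<le> \<rho>" using cs by blast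
  qed
  have "gen_cov_radius t n C \<le> \<rho>" unfolding gen_cov_radius_def by (rule Least_le) (use P in blast)
  moreover have "real \<rho> \<le> B" unfolding \<rho>_def using B0 by simp
  ultimately show ?thesis by linarith
qed

lemma gcr_cover:
  assumes "c0 \<in> C" "length c0 = n" "length vs = t" "\<forall>v\<in>set vs. length v = n"
  shows "\<exists>cs. length cs = t \<and> set cs \<subseteq> C \<and> tdist vs cs \<le> gen_cov_radius t n C"
proof -
  let ?P = "\<lambda>\<rho>. \<forall>vs. length vs = t \<and> (\<forall>v\<in>set vs. length v = n) \<longrightarrow>
      (\<exists>cs. length cs = t \<and> set cs \<subseteq> C \<and> tdist vs cs \<le> \<rho>)"
  have "?P n"
  proof (intro allI impI)
    fix vs :: "bool list list" assume a: "length vs = t \<and> (\<forall>v\<in>set vs. length v = n)"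
    have "\<forall>w\<in>set (map2 vadd vs (replicate t c0)). length w \<le> n"
      using a by (auto simp: vadd_len dest!: set_zip_leftD)
    then have "tdist vs (replicate t c0) \<le> n" unfolding tdist_def by (rule tweight_le)
    then show "\<exists>cs. length cs = t \<and> set cs \<subseteq> C \<and> tdist vs cs \<le> n"
      using assms(1) by (intro exI[where x="replicate t c0"]) auto
  qed
  then have "?P (gen_cov_radius t n C)" unfolding gen_cov_radius_def by (rule LeastI)
  then show ?thesis using assms by blast
qed

lemma RM_len: "c \<in> RM r m \<Longrightarrow> length c = 2^m"
proof (induction m arbitrary: r c)
  case 0 then show ?case by simp
next
  case (Suc m)
  show ?case
  proof (cases "r = 0 \<or> Suc m \<le> r")
    case True then show ?thesis using Suc.prems by (auto split: if_splits)
  next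
    case False
    then obtain u v where "c = u @ vadd u v" "u \<in> RM r m" "v \<in> RM (r-1) m" using Suc.prems by auto
    then show ?thesis using Suc.IH by (simp add: vadd_len)
  qed
qed

lemma RM_ne: "replicate (2^m) False \<in> RM r m"
proof (induction m arbitrary: r)
  case 0 then show ?case by simp
next
  case (Suc m)
  have e: "replicate (2^Suc m) False = replicate (2^m) False @ vadd (replicate (2^m) False) (replicate (2^m) False)"
    by (simp add: vadd_repF replicate_add[symmetric] mult_2)
  show ?case using Suc.IH e by (auto simp: vadd_len)
qed

lemma base_bound:
  assumes t: "t \<ge> 1"
  shows "real (R_RM t 1 k) \<le> (1 - 1/2^t) * 2^k - sqrt (2^k / 2^(t+1))"
  unfolding R_RM_def
proof (rule gcr_le, intro allI impI)
  fix vs :: "bool list list"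
  assume a: "length vs = t \<and> (\<forall>v\<in>set vs. length v = 2^k)"
  define n :: nat where "n = 2^k"
  have ne: "vs \<noteq> []" using a t by auto
  obtain cs where cs: "length cs = length vs" "set cs \<subseteq> RM 1 k" "\<forall>c\<in>set cs. length c = 2^k"
    and b: "real (card {..<n}) / 2^length vs + sqrt (real (card {..<n}) / 2^(length vs + 1))
       \<le> real (card {x\<in>{..<n}. \<forall>i<length vs. vs!i!x = cs!i!x})"
    using rows_step[OF ne _ , of k "{..<n}"] a unfolding n_def by auto
  define Ag where "Ag = {x\<in>{..<n}. \<forall>i<length vs. vs!i!x = cs!i!x}"
  define D where "D = {j. j < n \<and> (\<exists>i<length vs. vs!i!j \<noteq> cs!i!j)}"
  have td: "tdist vs cs = card D" unfolding D_def using tdist_eq[OF cs(1)] a cs(3) n_def by auto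
  have "{..<n} = D \<union> Ag" "D \<inter> Ag = {}" unfolding D_def Ag_def by auto
  then have "card {..<n} = card D + card Ag" by (metis card_Un_disjoint finite_Un finite_lessThan)
  then have "real (tdist vs cs) = real n - real (card Ag)" using td by simp
  also have "\<dots> \<le> real n - (real n / 2^t + sqrt (real n / 2^(t+1)))"
    using b a unfolding Ag_def by simp
  also have "\<dots> = (1 - 1/2^t) * 2^k - sqrt (2^k / 2^(t+1))"
    unfolding n_def by (simp add: algebra_simps)
  finally show "\<exists>cs. length cs = t \<and> set cs \<subseteq> RM 1 k \<and> real (tdist vs cs) \<le> (1 - 1/2^t) * 2^k - sqrt (2^k / 2^(t+1))"
    using cs a by auto
qed

lemma full_R:
  assumes "m \<ge> 1"
  shows "R_RM t m m = 0"
proof -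
  obtain m' where m': "m = Suc m'" using assms by (cases m) auto
  have RMf: "RM m m = {xs. length xs = 2^m}" using m' by simp
  have "real (R_RM t m m) \<le> 0"
    unfolding R_RM_def
  proof (rule gcr_le, intro allI impI)
    fix vs :: "bool list list"
    assume a: "length vs = t \<and> (\<forall>v\<in>set vs. length v = 2^m)"
    have "tdist vs vs = card {j. j < 2^m \<and> (\<exists>i<length vs. vs!i!j \<noteq> vs!i!j)}"
      using tdist_eq[of vs vs "2^m"] a by auto
    then have "tdist vs vs = 0" by simp
    then show "\<exists>cs. length cs = t \<and> set cs \<subseteq> RM m m \<and> real (tdist vs cs) \<le> 0"
      using a RMf by (intro exI[where x=vs]) auto
  qed
  then show ?thesis by simp
qed

lemma recur_R:
  assumes r1: "1 \<le> r" and rm: "r \<le> m"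
  shows "real (R_RM t r (Suc m)) \<le> real (R_RM t r m) + real (R_RM t (r-1) m)"
  unfolding R_RM_def
proof (rule gcr_le, intro allI impI)
  fix vs :: "bool list list"
  assume a: "length vs = t \<and> (\<forall>v\<in>set vs. length v = 2^Suc m)"
  define n :: nat where "n = 2^m"
  have lvs: "\<forall>v\<in>set vs. length v = n + n" using a unfolding n_def by simp
  define as where "as = map (take n) vs"
  have las: "length as = t" "\<forall>v\<in>set as. length v = n" using a lvs unfolding as_def by auto
  obtain us where us: "length us = t" "set us \<subseteq> RM r m" "tdist as us \<le> gen_cov_radius t (2^m) (RM r m)"
    using gcr_cover[OF RM_ne[of m r] _ las(1)] las(2) unfolding n_def by auto
  have lus: "\<forall>u\<in>set us. length u = n" using us(2) RM_len unfolding n_def by blast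
  define bs where "bs = map2 vadd (map (drop n) vs) us"
  have lbs: "length bs = t" "\<forall>v\<in>set bs. length v = n"
  proof -
    show "length bs = t" unfolding bs_def using a us(1) by simp
    show "\<forall>v\<in>set bs. length v = n"
    proof
      fix v assume "v \<in> set bs"
      then obtain i where "i < t" "v = vadd (drop n (vs!i)) (us!i)"
        unfolding bs_def using a us(1) by (auto simp: in_set_conv_nth)
      then show "length v = n" using lvs lus a us(1) by (auto simp: vadd_len)
    qed
  qed
  obtain ws where ws: "length ws = t" "set ws \<subseteq> RM (r-1) m" "tdist bs ws \<le> gen_cov_radius t (2^m) (RM (r-1) m)"
    using gcr_cover[OF RM_ne[of m "r-1"] _ lbs(1)] lbs(2) unfolding n_def by auto
  have lws: "\<forall>u\<in>set ws. length u = n" using ws(2) RM_len unfolding n_def by blast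
  define cs where "cs = map2 (\<lambda>u w. u @ vadd u w) us ws"
  have lcs: "length cs = t" unfolding cs_def using us(1) ws(1) by simp
  have csi: "cs!i = us!i @ vadd (us!i) (ws!i)" if "i < t" for i
    unfolding cs_def using that us(1) ws(1) by simp
  have usi: "length (us!i) = n" "length (ws!i) = n" "length (vs!i) = n + n" if "i < t" for i
    using that lus lws lvs us(1) ws(1) a by auto
  have RMS: "RM r (Suc m) = {u @ vadd u v | u v. u \<in> RM r m \<and> v \<in> RM (r - 1) m}"
    using r1 rm by simp
  have cRM: "set cs \<subseteq> RM r (Suc m)"
  proof
    fix c assume "c \<in> set cs"
    then obtain i where i: "i < t" "c = cs!i" using lcs by (auto simp: in_set_conv_nth)
    have "us!i \<in> RM r m" "ws!i \<in> RM (r-1) m" using i us ws by auto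
    then show "c \<in> RM r (Suc m)" unfolding RMS using i csi by blast
  qed
  have lcs2: "\<forall>c\<in>set cs. length c = n + n"
  proof
    fix c assume "c \<in> set cs"
    then obtain i where i: "i < t" "c = cs!i" using lcs by (auto simp: in_set_conv_nth)
    then show "length c = n + n" using csi usi by (simp add: vadd_len)
  qed
  define D where "D = {j. j < n + n \<and> (\<exists>i<t. vs!i!j \<noteq> cs!i!j)}"
  define D1 where "D1 = {j. j < n \<and> (\<exists>i<t. as!i!j \<noteq> us!i!j)}"
  define D2 where "D2 = {j. j < n \<and> (\<exists>i<t. bs!i!j \<noteq> ws!i!j)}"
  have tD: "tdist vs cs = card D" unfolding D_def using tdist_eq[of cs vs "n+n"] lcs a lvs lcs2 by auto
  have tD1: "tdist as us = card D1" unfolding D1_def using tdist_eq[of us as n] las us(1) lus by auto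
  have tD2: "tdist bs ws = card D2" unfolding D2_def using tdist_eq[of ws bs n] lbs ws(1) lws by auto
  have p1: "(vs!i!j \<noteq> cs!i!j) = (as!i!j \<noteq> us!i!j)" if "i < t" "j < n" for i j
    using that usi[OF that(1)] csi[OF that(1)] a unfolding as_def by (simp add: nth_append)
  have p2: "(vs!i!(n+j) \<noteq> cs!i!(n+j)) = (bs!i!j \<noteq> ws!i!j)" if "i < t" "j < n" for i j
  proof -
    have "vs!i!(n+j) = drop n (vs!i) ! j" using usi[OF that(1)] that by simp
    moreover have "cs!i!(n+j) = (us!i!j \<noteq> ws!i!j)"
      using csi[OF that(1)] usi[OF that(1)] that by (simp add: nth_append vadd_nth)
    moreover have "bs!i!j = (drop n (vs!i) ! j \<noteq> us!i!j)"
      unfolding bs_def using that usi[OF that(1)] a us(1) by (simp add: vadd_nth)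
    ultimately show ?thesis by auto
  qed
  have e1: "D \<inter> {..<n} = D1" unfolding D_def D1_def using p1 by auto
  have e2: "D - {..<n} = (\<lambda>j. n + j) ` D2"
  proof
    show "D - {..<n} \<subseteq> (\<lambda>j. n + j) ` D2"
    proof
      fix j assume j: "j \<in> D - {..<n}"
      then obtain i where i: "i < t" "j < n + n" "\<not> j < n" "vs!i!j \<noteq> cs!i!j" unfolding D_def by auto
      have jj: "n + (j - n) = j" using i by simp
      have "bs!i!(j-n) \<noteq> ws!i!(j-n)" using p2[of i "j - n"] i jj by simp
      then have "j - n \<in> D2" unfolding D2_def using i by auto
      moreover have "j = n + (j - n)" using j by auto
      ultimately show "j \<in> (\<lambda>j. n + j) ` D2" by blast
    qed
  next
    show "(\<lambda>j. n + j) ` D2 \<subseteq> D - {..<n}"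
      unfolding D_def D2_def using p2 by auto
  qed
  have "card D = card (D \<inter> {..<n}) + card (D - {..<n})"
    by (rule card_Int_Diff) (simp add: D_def)
  also have "\<dots> = card D1 + card D2" using e1 e2 by (simp add: card_image)
  finally have "tdist vs cs = tdist as us + tdist bs ws" using tD tD1 tD2 by simp
  then have "real (tdist vs cs) \<le> real (gen_cov_radius t (2 ^ m) (RM r m)) + real (gen_cov_radius t (2 ^ m) (RM (r - 1) m))"
    using us(3) ws(3) by simp
  then show "\<exists>cs. length cs = t \<and> set cs \<subseteq> RM r (Suc m) \<and>
     real (tdist vs cs) \<le> real (gen_cov_radius t (2 ^ m) (RM r m)) + real (gen_cov_radius t (2 ^ m) (RM (r - 1) m))"
    using lcs cRM by blast
qed

lemma main_bound:
  fixes t :: nat and A \<nu> \<mu> :: real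
  assumes t: "t \<ge> 1" and A: "A = 1/((1+sqrt 2) * sqrt (2^(t+1)))"
    and \<nu>: "\<nu> \<ge> 1 + sqrt 2" and \<mu>: "\<mu> = 1 + 1/\<nu>"
  shows "1 \<le> r \<Longrightarrow> r \<le> m \<Longrightarrow> real (R_RM t r m) \<le> (1-1/2^t)*2^m
            - (A * sqrt 2 ^ m * (1+sqrt 2)^r - A * \<mu>^m * \<nu>^r)"
proof (induction m arbitrary: r)
  case 0 then show ?case by simp
next
  case (Suc m)
  have s2: "sqrt 2 * sqrt 2 = (2::real)" by simp
  have s2p: "sqrt 2 > (1::real)" by simp
  have \<nu>0: "\<nu> > 0" using \<nu> s2p by linarith
  have A0: "A \<ge> 0" unfolding A using s2p by simp
  have \<mu>0: "\<mu> > 0" unfolding \<mu> using \<nu>0 by (simp add: add_pos_pos)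
  have t2: "(1 - 1/2^t :: real) \<ge> 0" by simp
  show ?case
  proof (cases "r = 1")
    case True
    have gen: "1/(p*q) * x * p = x / q" if "p > 0" for p q x :: real
      using that by simp
    have "A * sqrt 2 ^ Suc m * (1+sqrt 2) = sqrt 2 ^ Suc m / sqrt (2^(t+1))"
      unfolding A by (rule gen) (use s2p in linarith)
    also have "\<dots> = sqrt (2 ^ Suc m / 2^(t+1))" by (simp only: real_sqrt_divide real_sqrt_power)
    finally have e: "A * sqrt 2 ^ Suc m * (1+sqrt 2) = sqrt (2 ^ Suc m / 2^(t+1))" .
    have "A * \<mu>^Suc m * \<nu> \<ge> 0" using A0 \<mu>0 \<nu>0 by simp
    then show ?thesis using base_bound[OF t, of "Suc m"] True e by simp
  next
    case False
    show ?thesis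
    proof (cases "r = Suc m")
      case True
      have R0: "R_RM t r (Suc m) = 0" using full_R[of "Suc m" t] True by simp
      have mn: "\<mu> * \<nu> = \<nu> + 1" unfolding \<mu> using \<nu>0 by (simp add: field_simps)
      have "sqrt 2 * (1+sqrt 2) = 2 + sqrt 2" using s2 by (simp add: algebra_simps)
      then have "sqrt 2 * (1 + sqrt 2) \<le> \<mu> * \<nu>" using mn \<nu> by linarith
      then have "(sqrt 2 * (1 + sqrt 2))^Suc m \<le> (\<mu> * \<nu>)^Suc m"
        by (intro power_mono) (use s2p in auto)
      then have "A * (sqrt 2 * (1 + sqrt 2))^Suc m \<le> A * (\<mu> * \<nu>)^Suc m"
        using A0 by (intro mult_left_mono) auto
      moreover have "A * sqrt 2 ^ Suc m * (1+sqrt 2)^r = A * (sqrt 2 * (1 + sqrt 2))^Suc m"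
        by (simp only: True power_mult_distrib mult.assoc)
      moreover have "A * \<mu> ^ Suc m * \<nu>^r = A * (\<mu> * \<nu>)^Suc m"
        by (simp only: True power_mult_distrib mult.assoc)
      ultimately have "A * sqrt 2 ^ Suc m * (1+sqrt 2)^r - A * \<mu>^Suc m * \<nu>^r \<le> 0"
        by linarith
      moreover have "(1-1/2^t)*(2::real)^Suc m \<ge> 0" using t2 by simp
      moreover have "real (R_RM t r (Suc m)) = 0" using R0 by simp
      ultimately show ?thesis by linarith
    next
      case False2: False
      obtain r' where r': "r = Suc r'" using Suc.prems by (cases r) auto
      have r'1: "1 \<le> r'" using \<open>r \<noteq> 1\<close> r' by simp
      have rm: "r \<le> m" using Suc.prems False2 by simp
      have IH1: "real (R_RM t r m) \<le> (1-1/2^t)*2^m - (A * sqrt 2 ^ m * (1+sqrt 2)^r - A * \<mu>^m * \<nu>^r)"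
        using Suc.IH[of r] Suc.prems rm by simp
      have IH2: "real (R_RM t r' m) \<le> (1-1/2^t)*2^m - (A * sqrt 2 ^ m * (1+sqrt 2)^r' - A * \<mu>^m * \<nu>^r')"
        using Suc.IH[of r'] r'1 rm r' by simp
      have rec: "real (R_RM t r (Suc m)) \<le> real (R_RM t r m) + real (R_RM t r' m)"
        using recur_R[OF Suc.prems(1) rm, of t] r' by simp
      have g1: "sqrt 2 ^ Suc m * (1+sqrt 2)^r = sqrt 2 ^ m * (1+sqrt 2)^r + sqrt 2 ^ m * (1+sqrt 2)^r'"
      proof -
        have "sqrt 2 * (1 + sqrt 2) = (1 + sqrt 2) + 1" using s2 by (simp add: algebra_simps)
        moreover have "sqrt 2 ^ Suc m * (1+sqrt 2)^r = sqrt 2 ^ m * (1+sqrt 2)^r' * (sqrt 2 * (1 + sqrt 2))"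
          unfolding r' by (simp only: power_Suc mult_ac)
        ultimately have "sqrt 2 ^ Suc m * (1+sqrt 2)^r = sqrt 2 ^ m * (1+sqrt 2)^r' * ((1 + sqrt 2) + 1)"
          by simp
        then show ?thesis by (simp add: r' algebra_simps)
      qed
      have g2: "\<mu>^Suc m * \<nu>^r = \<mu>^m * \<nu>^r + \<mu>^m * \<nu>^r'"
      proof -
        have "\<mu> * \<nu> = \<nu> + 1" unfolding \<mu> using \<nu>0 by (simp add: field_simps)
        moreover have "\<mu>^Suc m * \<nu>^r = \<mu>^m * \<nu>^r' * (\<mu> * \<nu>)"
          unfolding r' by (simp only: power_Suc mult_ac)
        ultimately have "\<mu>^Suc m * \<nu>^r = \<mu>^m * \<nu>^r' * (\<nu> + 1)"
          by simp
        then show ?thesis by (simp add: r' algebra_simps)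
      qed
      have "(1-1/2^t)*(2::real)^Suc m = (1-1/2^t)*2^m + (1-1/2^t)*2^m" by simp
      then show ?thesis using IH1 IH2 rec g1 g2 by (simp add: algebra_simps)
    qed
  qed
qed

theorem theorem21:
  fixes t :: nat and \<alpha> :: real
  assumes "t \<ge> 1" and "0 < \<alpha>" and "\<alpha> < 1 - 1 / sqrt 2"
  shows "\<exists>\<epsilon> :: nat \<Rightarrow> real. \<epsilon> \<longlonglongrightarrow> 0 \<and>
    (\<forall>\<^sub>F m in sequentially. \<forall>r :: nat. real r = \<alpha> * real m \<longrightarrow>
       real (R_RM t r m) \<le> (1 - 1 / 2 ^ t) * 2 ^ m
         - sqrt (2 ^ t - 1) / (2 ^ t * (2 + sqrt 2))
           * 2 powr (real m * (1 / 2 + \<alpha> * log 2 (1 + sqrt 2))) * (1 + \<epsilon> m))"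
proof -
  note t = assms(1) and \<alpha>0 = assms(2) and \<alpha>1 = assms(3)
  define \<phi> :: real where "\<phi> = 1 + sqrt 2"
  define a :: real where "a = sqrt 2 - 1"
  have s2: "sqrt 2 * sqrt 2 = (2::real)" by simp
  have s2p: "sqrt 2 > (1::real)" by simp
  have "1 / sqrt 2 > (0::real)" by simp
  then have \<alpha>lt1: "\<alpha> < 1" using \<alpha>1 by linarith
  have a0: "a > 0" unfolding a_def using s2p by simp
  have \<phi>0: "\<phi> > 0" unfolding \<phi>_def using s2p by linarith
  have a\<phi>: "a * \<phi> = 1" unfolding a_def \<phi>_def using s2 by (simp add: algebra_simps)
  have \<alpha>a: "\<alpha> * (1 + a) < a"
  proof -
    have "\<alpha> * sqrt 2 < (1 - 1 / sqrt 2) * sqrt 2" using \<alpha>1 s2p by simp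
    also have "\<dots> = sqrt 2 - 1" using s2p by (simp add: algebra_simps)
    finally show ?thesis unfolding a_def by simp
  qed
  define \<delta> where "\<delta> = (a/\<alpha> - 1 - a)/2"
  have \<delta>0: "\<delta> > 0"
  proof -
    have "1 + a < a / \<alpha>" using \<alpha>a \<alpha>0 by (simp add: field_simps)
    then show ?thesis unfolding \<delta>_def by simp
  qed
  have key: "\<alpha> * (1 + a + \<delta>) < a"
  proof -
    have "\<alpha> * \<delta> = (a - \<alpha> - \<alpha> * a)/2" unfolding \<delta>_def using \<alpha>0 by (simp add: field_simps)
    then show ?thesis using \<alpha>a by (simp add: algebra_simps)
  qed
  define \<nu> where "\<nu> = \<phi> * (1 + \<delta>)"
  define \<mu> where "\<mu> = 1 + 1/\<nu>"
  have "\<phi> * \<delta> > 0" using \<phi>0 \<delta>0 by (rule mult_pos_pos)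
  moreover have "\<nu> = \<phi> + \<phi> * \<delta>" unfolding \<nu>_def by (simp add: algebra_simps)
  ultimately have \<nu>\<phi>: "\<nu> \<ge> 1 + sqrt 2" unfolding \<phi>_def by linarith
  have \<nu>0: "\<nu> > 0" unfolding \<nu>_def using \<phi>0 \<delta>0 by simp
  have \<mu>a: "\<mu> = 1 + a / (1 + \<delta>)"
  proof -
    have ia: "1/\<phi> = a" using a\<phi> \<phi>0 by (simp add: field_simps)
    have "1/\<nu> = (1/\<phi>) / (1+\<delta>)" unfolding \<nu>_def by simp
    then have "1/\<nu> = a / (1+\<delta>)" using ia by simp
    then show ?thesis unfolding \<mu>_def by simp
  qed
  have \<mu>0: "\<mu> > 0" using \<mu>a a0 \<delta>0 by (simp add: add_pos_pos)
  define \<theta> where "\<theta> = (\<mu> / sqrt 2) * (1 + \<delta>) powr \<alpha>"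
  have \<theta>0: "\<theta> > 0" unfolding \<theta>_def using \<mu>0 \<delta>0 by simp
  have \<theta>1: "\<theta> < 1"
  proof -
    have y: "(1 + \<delta>) powr \<alpha> * 1 powr (1 - \<alpha>) \<le> \<alpha> * (1 + \<delta>) + (1 - \<alpha>) * 1"
      by (rule Youngs_inequality_0) (use \<alpha>0 \<alpha>lt1 \<delta>0 in auto)
    have y2: "(1 + \<delta>) powr \<alpha> \<le> 1 + \<alpha> * \<delta>" using y by (simp add: algebra_simps)
    have d: "(1+a)*(1+\<delta>) - (1+\<delta>+a)*(1+\<alpha>*\<delta>) = \<delta> * (a - \<alpha>*(1+a+\<delta>))"
      by (simp add: algebra_simps)
    have "\<delta> * (a - \<alpha>*(1+a+\<delta>)) > 0" using \<delta>0 key by simp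
    then have "(1+\<delta>+a)*(1+\<alpha>*\<delta>) < (1+a)*(1+\<delta>)" using d by linarith
    then have lt: "(1+\<delta>+a)/(1+\<delta>)*(1+\<alpha>*\<delta>) < 1+a" using \<delta>0
      by (simp add: field_simps)
    have e: "(1+\<delta>+a)/(1+\<delta>) = \<mu>" unfolding \<mu>a using \<delta>0 by (simp add: field_simps)
    have "\<mu> * (1 + \<alpha> * \<delta>) < 1 + a" using lt by (simp only: e)
    then have m1: "\<mu> * (1 + \<alpha> * \<delta>) < sqrt 2" unfolding a_def by simp
    have "\<theta> \<le> (\<mu> / sqrt 2) * (1 + \<alpha> * \<delta>)" unfolding \<theta>_def
      using y2 \<mu>0 by (intro mult_left_mono) auto
    also have "\<dots> < 1" using m1 s2p by (simp add: field_simps)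
    finally show ?thesis .
  qed
  define A :: real where "A = 1/((1+sqrt 2) * sqrt (2^(t+1)))"
  define K :: real where "K = sqrt (2 ^ t - 1) / (2 ^ t * (2 + sqrt 2))"
  have KA: "K < A"
  proof -
    define s :: real where "s = 2^t"
    have "(2::real)^1 \<le> 2^t" by (rule power_increasing) (use t in auto)
    then have s2': "s \<ge> 2" unfolding s_def by simp
    have ss: "sqrt s * sqrt s = s" using s2' by simp
    have sq0: "sqrt s > 0" using s2' by simp
    have "sqrt (s - 1) < sqrt s" using s2' by simp
    then have "sqrt (s - 1) / s < sqrt s / s" using s2' by (intro divide_strict_right_mono) auto
    moreover have "sqrt s / s = 1 / sqrt s"
    proof -
      have "sqrt s / s = sqrt s / (sqrt s * sqrt s)" by (simp only: ss)
      also have "\<dots> = 1 / sqrt s"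
      proof -
        have g: "\<And>x::real. x > 0 \<Longrightarrow> x/(x*x) = 1/x" by simp
        show ?thesis by (rule g[OF sq0])
      qed
      finally show ?thesis .
    qed
    ultimately have i: "sqrt (s - 1) / s < 1 / sqrt s" by simp
    have eK: "K = (sqrt (s - 1) / s) / (sqrt 2 * \<phi>)"
    proof -
      have "2 + sqrt 2 = sqrt 2 * \<phi>" unfolding \<phi>_def using s2 by (simp add: algebra_simps)
      then show ?thesis unfolding K_def s_def by simp
    qed
    have eA: "A = (1 / sqrt s) / (sqrt 2 * \<phi>)"
    proof -
      have "sqrt (2^(t+1)) = sqrt 2 * sqrt s" unfolding s_def by (simp add: real_sqrt_mult)
      then show ?thesis unfolding A_def \<phi>_def by (simp add: algebra_simps)
    qed
    show ?thesis unfolding eK eA using i \<phi>0 s2p by (intro divide_strict_right_mono) auto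
  qed
  have A0: "A > 0" unfolding A_def using s2p by (simp add: add_pos_pos)
  have ev1: "\<forall>\<^sub>F m in sequentially. \<theta> ^ m < 1 - K / A"
  proof -
    have "(\<lambda>m. \<theta> ^ m) \<longlonglongrightarrow> 0" using \<theta>0 \<theta>1 by (intro LIMSEQ_power_zero) simp
    moreover have "1 - K / A > 0" using KA A0 by (simp add: field_simps)
    ultimately show ?thesis by (rule order_tendstoD(2))
  qed
  have ev: "\<forall>\<^sub>F m in sequentially. \<forall>r :: nat. real r = \<alpha> * real m \<longrightarrow>
       real (R_RM t r m) \<le> (1 - 1 / 2 ^ t) * 2 ^ m
         - sqrt (2 ^ t - 1) / (2 ^ t * (2 + sqrt 2))
           * 2 powr (real m * (1 / 2 + \<alpha> * log 2 (1 + sqrt 2))) * (1 + 0)"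
    using ev1 eventually_ge_at_top[of 1]
  proof eventually_elim
    case (elim m)
    show ?case
    proof (intro allI impI)
      fix r :: nat assume rm: "real r = \<alpha> * real m"
      have r1: "1 \<le> r"
      proof -
        have "real r > 0" using rm \<alpha>0 elim(2) by simp
        then show ?thesis by simp
      qed
      have "1 / sqrt 2 > (0::real)" by simp
      then have \<alpha>le1: "\<alpha> < 1" using \<alpha>1 by linarith
      have "\<alpha> * real m \<le> 1 * real m" using \<alpha>le1 by (intro mult_right_mono) auto
      then have "real r \<le> real m" using rm by simp
      then have r2: "r \<le> m" by simp
      have mb: "real (R_RM t r m) \<le> (1-1/2^t)*2^m - (A * sqrt 2 ^ m * (1+sqrt 2)^r - A * \<mu>^m * \<nu>^r)"
        by (rule main_bound[OF t A_def \<nu>\<phi> \<mu>_def r1 r2])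
      define X where "X = 2 powr (real m * (1 / 2 + \<alpha> * log 2 (1 + sqrt 2)))"
      have eX: "X = sqrt 2 ^ m * \<phi> ^ r"
      proof -
        have "X = 2 powr (1/2 * real m) * 2 powr (log 2 \<phi> * real r)"
          unfolding X_def \<phi>_def using rm by (simp add: powr_add[symmetric] algebra_simps)
        also have "2 powr (1/2 * real m) = sqrt 2 ^ m"
        proof -
          have "(2::real) powr (1/2 * real m) = (2 powr (1/2)) powr real m" by (simp only: powr_powr)
          also have "\<dots> = sqrt 2 ^ m" by (simp add: powr_half_sqrt powr_realpow)
          finally show ?thesis .
        qed
        also have "(2::real) powr (log 2 \<phi> * real r) = \<phi> ^ r"
        proof -
          have "(2::real) powr (log 2 \<phi> * real r) = (2 powr (log 2 \<phi>)) powr real r" by (simp only: powr_powr)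
          also have "\<dots> = \<phi> ^ r" using \<phi>0 by (simp add: powr_realpow)
          finally show ?thesis .
        qed
        finally show ?thesis .
      qed
      have e\<theta>: "\<mu>^m * \<nu>^r = sqrt 2 ^ m * \<phi> ^ r * \<theta> ^ m"
      proof -
        have "((1 + \<delta>) powr \<alpha>) ^ m = (1 + \<delta>) ^ r"
        proof -
          have "((1 + \<delta>) powr \<alpha>) ^ m = ((1 + \<delta>) powr \<alpha>) powr (real m)"
            using \<delta>0 by (simp add: powr_realpow)
          also have "\<dots> = (1 + \<delta>) powr (real r)" using rm by (simp add: powr_powr)
          also have "\<dots> = (1 + \<delta>) ^ r" using \<delta>0 by (simp add: powr_realpow)
          finally show ?thesis .
        qed
        moreover have "\<theta> ^ m = (\<mu> / sqrt 2) ^ m * ((1 + \<delta>) powr \<alpha>) ^ m"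
          unfolding \<theta>_def by (rule power_mult_distrib)
        ultimately have "\<theta> ^ m = (\<mu> / sqrt 2) ^ m * (1 + \<delta>) ^ r" by simp
        then have "sqrt 2 ^ m * \<phi> ^ r * \<theta> ^ m = (sqrt 2 ^ m * (\<mu> / sqrt 2) ^ m) * (\<phi> ^ r * (1 + \<delta>) ^ r)"
          by (simp add: algebra_simps)
        also have "\<dots> = \<mu>^m * \<nu>^r" unfolding \<nu>_def
          by (simp add: power_mult_distrib[symmetric])
        finally show ?thesis by simp
      qed
      have X0: "X \<ge> 0" unfolding X_def by simp
      have "A * sqrt 2 ^ m * (1+sqrt 2)^r - A * \<mu>^m * \<nu>^r = A * (sqrt 2 ^ m * \<phi>^r) - A * (\<mu>^m * \<nu>^r)"
        unfolding \<phi>_def by (simp only: mult.assoc)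
      also have "\<dots> = A * X * (1 - \<theta> ^ m)"
        unfolding e\<theta> eX by (simp add: algebra_simps)
      also have "\<dots> \<ge> A * X * (K / A)"
        using elim(1) A0 X0 by (intro mult_left_mono) auto
      finally have "A * sqrt 2 ^ m * (1+sqrt 2)^r - A * \<mu>^m * \<nu>^r \<ge> K * X"
        using A0 by (simp add: mult.commute)
      then show "real (R_RM t r m) \<le> (1 - 1 / 2 ^ t) * 2 ^ m
         - sqrt (2 ^ t - 1) / (2 ^ t * (2 + sqrt 2))
           * 2 powr (real m * (1 / 2 + \<alpha> * log 2 (1 + sqrt 2))) * (1 + 0)"
        using mb unfolding X_def K_def by simp
    qed
  qed
  show ?thesis
    by (rule exI[where x="\<lambda>_. 0"]) (use ev in auto)
qed

end
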